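(* Let $k$ be a field of characteristic $0$, $R = k[t_1, \dots, t_n]$, and let $x_1, \dots, x_m \in (k^* )^n$ with $x_i = (x_{i,1}, \dots, x_{i,n})$. Let $\mathfrak{m} = (t_1 - 1, \dots, t_n - 1) \subset R$, let $\mathfrak{p} \subset \mathfrak{m}$ be a prime ideal of height $n'$, and let $A = \operatorname{Stab}_X(\mathfrak{p})$. Then there exists a subgroup $B \subset \mathbf{Z}^n$ of rank at least $n'$ such that $\langle a, b \rangle_X = 1$ for all $a \in A$ and $b \in B$.
   Context: For $a \in \mathbf{Z}^m$ write $x^a = \prod_{i=1}^m x_i^{a_i} \in (k^* )^n$ (coordinatewise). An element $z = (z_1,\dots,z_n) \in (k^* )^n$ acts on $R$ by $(z\cdot f)(t_1,\dots,t_n) = f(z_1t_1, \dots, z_nt_n)$, and for an ideal $\mathfrak{p}$, $\operatorname{Stab}_X(\mathfrak{p}) = \{a \in \mathbf{Z}^m : x^a \cdot \mathfrak{p} = \mathfrak{p}\}$. The pairing $\langle\cdot,\cdot\rangle_X: \mathbf{Z}^m \times \mathbf{Z}^n \to k^*$ is $\langle (a_i), (b_j) \rangle_X = \prod_{i,j} x_{i,j}^{a_i b_j}$. *)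

theory Defs
  imports "HOL-Library.Poly_Mapping" "HOL-Library.Extended_Nat"
begin

text \<open>Polynomial ring k[t_j : j in 'n] over a commutative ring, variables indexed by a finite type 'n:
  a polynomial is a finitely supported map from monomials (exponent vectors 'n =>0 nat) to coefficients.\<close>

type_synonym ('n, 'k) mpoly = "('n \<Rightarrow>\<^sub>0 nat) \<Rightarrow>\<^sub>0 'k"

definition var :: "'n \<Rightarrow> ('n, 'k::comm_ring_1) mpoly" where
  "var j = Poly_Mapping.single (Poly_Mapping.single j 1) 1"

definition is_ideal :: "'a::comm_ring_1 set \<Rightarrow> bool" where
  "is_ideal I \<longleftrightarrow> 0 \<in> I \<and> (\<forall>a\<in>I. \<forall>b\<in>I. a + b \<in> I) \<and> (\<forall>r. \<forall>a\<in>I. r * a \<in> I)"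

definition is_prime_ideal :: "'a::comm_ring_1 set \<Rightarrow> bool" where
  "is_prime_ideal P \<longleftrightarrow> is_ideal P \<and> P \<noteq> UNIV \<and> (\<forall>a b. a * b \<in> P \<longrightarrow> a \<in> P \<or> b \<in> P)"

definition ideal_gen :: "'a::comm_ring_1 set \<Rightarrow> 'a set" where
  "ideal_gen S = \<Inter>{I. is_ideal I \<and> S \<subseteq> I}"

definition prime_chain_ending :: "'a::comm_ring_1 set \<Rightarrow> nat \<Rightarrow> bool" where
  "prime_chain_ending P k \<longleftrightarrow> (\<exists>C :: nat \<Rightarrow> 'a set.
      (\<forall>i\<le>k. is_prime_ideal (C i)) \<and> (\<forall>i<k. C i \<subset> C (Suc i)) \<and> C k = P)"

definition ideal_height :: "'a::comm_ring_1 set \<Rightarrow> enat" where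
  "ideal_height P = Sup {enat k | k. prime_chain_ending P k}"

definition max_ideal_one :: "('n, 'k::comm_ring_1) mpoly set" where
  "max_ideal_one = ideal_gen (range (\<lambda>j. var j - 1))"

text \<open>Torus action: (z . f)(t_1,...,t_n) = f(z_1 t_1, ..., z_n t_n), i.e. the coefficient of
  the monomial t^alpha gets multiplied by z^alpha.\<close>
definition torus_act :: "('n::finite \<Rightarrow> 'k::comm_ring_1) \<Rightarrow> ('n, 'k) mpoly \<Rightarrow> ('n, 'k) mpoly" where
  "torus_act z f = Poly_Mapping.mapp (\<lambda>\<alpha> c. c * (\<Prod>j\<in>UNIV. z j ^ Poly_Mapping.lookup \<alpha> j)) f"

definition tpow :: "('m::finite \<Rightarrow> 'n \<Rightarrow> 'k::field) \<Rightarrow> ('m \<Rightarrow> int) \<Rightarrow> ('n \<Rightarrow> 'k)" where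
  "tpow x a = (\<lambda>j. \<Prod>i\<in>UNIV. x i j powi a i)"

definition Stab :: "('m::finite \<Rightarrow> 'n::finite \<Rightarrow> 'k::field) \<Rightarrow> ('n, 'k) mpoly set \<Rightarrow> ('m \<Rightarrow> int) set" where
  "Stab x P = {a. torus_act (tpow x a) ` P = P}"

definition pairing :: "('m::finite \<Rightarrow> 'n::finite \<Rightarrow> 'k::field) \<Rightarrow> ('m \<Rightarrow> int) \<Rightarrow> ('n \<Rightarrow> int) \<Rightarrow> 'k" where
  "pairing x a b = (\<Prod>i\<in>UNIV. \<Prod>j\<in>UNIV. x i j powi (a i * b j))"

definition is_subgroup :: "('n \<Rightarrow> int) set \<Rightarrow> bool" where
  "is_subgroup B \<longleftrightarrow> (\<lambda>j. 0) \<in> B \<and> (\<forall>a\<in>B. \<forall>b\<in>B. (\<lambda>j. a j + b j) \<in> B) \<and> (\<forall>a\<in>B. (\<lambda>j. - a j) \<in> B)"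

definition Z_indep_family :: "('n \<Rightarrow> int) set \<Rightarrow> nat \<Rightarrow> bool" where
  "Z_indep_family B r \<longleftrightarrow> (\<exists>v :: nat \<Rightarrow> 'n \<Rightarrow> int. (\<forall>i<r. v i \<in> B) \<and>
      (\<forall>c :: nat \<Rightarrow> int. (\<forall>j. (\<Sum>i<r. c i * v i j) = 0) \<longrightarrow> (\<forall>i<r. c i = 0)))"

definition Z_rank :: "('n \<Rightarrow> int) set \<Rightarrow> enat" where
  "Z_rank B = Sup {enat r | r. Z_indep_family B r}"

end

theory Submission
  imports Defs "HOL-Library.FuncSet"
begin


section \<open>Ideals\<close>

lemma ideal_0: "is_ideal I \<Longrightarrow> 0 \<in> I" by (simp add: is_ideal_def)
lemma ideal_add: "is_ideal I \<Longrightarrow> a \<in> I \<Longrightarrow> b \<in> I \<Longrightarrow> a + b \<in> I" by (simp add: is_ideal_def)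
lemma ideal_mult_left: "is_ideal I \<Longrightarrow> a \<in> I \<Longrightarrow> r * a \<in> I" by (simp add: is_ideal_def)
lemma ideal_mult_right: "is_ideal I \<Longrightarrow> a \<in> I \<Longrightarrow> a * r \<in> I"
  by (metis ideal_mult_left mult.commute)
lemma ideal_uminus: "is_ideal I \<Longrightarrow> a \<in> I \<Longrightarrow> - a \<in> I"
  using ideal_mult_left[of I a "-1"] by simp
lemma ideal_diff: "is_ideal I \<Longrightarrow> a \<in> I \<Longrightarrow> b \<in> I \<Longrightarrow> a - b \<in> I"
  using ideal_add[of I a "-b"] ideal_uminus[of I b] by simp
lemma ideal_sum: "is_ideal I \<Longrightarrow> (\<And>x. x \<in> S \<Longrightarrow> f x \<in> I) \<Longrightarrow> sum f S \<in> I"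
proof (induction S rule: infinite_finite_induct)
  case (infinite A) then show ?case by (simp add: ideal_0)
next
  case empty then show ?case by (simp add: ideal_0)
next
  case (insert x F) then show ?case by (simp add: ideal_add)
qed

lemma prime_ideal_ideal: "is_prime_ideal P \<Longrightarrow> is_ideal P"
  by (simp add: is_prime_ideal_def)

lemma prime_one_notin: "is_prime_ideal P \<Longrightarrow> (1::'a::comm_ring_1) \<notin> P"
  unfolding is_prime_ideal_def is_ideal_def by (metis UNIV_eq_I mult.right_neutral)

lemma prime_mult: "is_prime_ideal P \<Longrightarrow> a * b \<in> P \<Longrightarrow> a \<in> P \<or> b \<in> P"
  by (simp add: is_prime_ideal_def)

lemma prime_power_notin: "is_prime_ideal P \<Longrightarrow> g \<notin> P \<Longrightarrow> g ^ e \<notin> P"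
proof (induction e)
  case 0 then show ?case using prime_one_notin by auto
next
  case (Suc e) then show ?case using prime_mult[of P g "g^e"] by auto
qed

section \<open>Evaluation\<close>

definition mon :: "('n::finite \<Rightarrow> 'k::comm_ring_1) \<Rightarrow> ('n \<Rightarrow>\<^sub>0 nat) \<Rightarrow> 'k" where
  "mon z \<alpha> = (\<Prod>j\<in>UNIV. z j ^ Poly_Mapping.lookup \<alpha> j)"

definition eval :: "('n::finite, 'k::comm_ring_1) mpoly \<Rightarrow> ('n \<Rightarrow> 'k) \<Rightarrow> 'k" where
  "eval f z = (\<Sum>\<alpha>\<in>Poly_Mapping.keys f. Poly_Mapping.lookup f \<alpha> * mon z \<alpha>)"

lemma mon_add: "mon z (\<alpha> + \<beta>) = mon z \<alpha> * mon z \<beta>"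
  by (simp add: mon_def lookup_add power_add prod.distrib)

lemma mon_zero [simp]: "mon z 0 = 1"
  by (simp add: mon_def)

lemma mon_one [simp]: "mon (\<lambda>_. 1) \<alpha> = 1"
  by (simp add: mon_def)

lemma eval_superset:
  assumes "finite S" "Poly_Mapping.keys f \<subseteq> S"
  shows "eval f z = (\<Sum>\<alpha>\<in>S. Poly_Mapping.lookup f \<alpha> * mon z \<alpha>)"
  unfolding eval_def
  by (rule sum.mono_neutral_left) (use assms in \<open>auto simp: in_keys_iff\<close>)

lemma eval_add: "eval (f + g) z = eval f z + eval g z"
proof -
  let ?S = "Poly_Mapping.keys f \<union> Poly_Mapping.keys g"
  have "eval (f + g) z = (\<Sum>\<alpha>\<in>?S. Poly_Mapping.lookup (f+g) \<alpha> * mon z \<alpha>)"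
    by (rule eval_superset) (auto simp: keys_add)
  also have "\<dots> = (\<Sum>\<alpha>\<in>?S. Poly_Mapping.lookup f \<alpha> * mon z \<alpha>) + (\<Sum>\<alpha>\<in>?S. Poly_Mapping.lookup g \<alpha> * mon z \<alpha>)"
    by (simp add: lookup_add distrib_right sum.distrib)
  also have "\<dots> = eval f z + eval g z"
    by (simp add: eval_superset[of ?S f z] eval_superset[of ?S g z])
  finally show ?thesis .
qed

lemma eval_zero [simp]: "eval 0 z = 0"
  by (simp add: eval_def)

lemma eval_uminus: "eval (- f) z = - eval f z"
proof -
  have "eval f z + eval (-f) z = 0" using eval_add[of f "-f" z] by simp
  then have "- eval f z = eval (-f) z" by (simp only: neg_eq_iff_add_eq_0)
  then show ?thesis by simp
qed

lemma eval_diff: "eval (f - g) z = eval f z - eval g z"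
  using eval_add[of f "-g" z] eval_uminus[of g z] by simp

lemma eval_sum: "eval (sum f S) z = (\<Sum>x\<in>S. eval (f x) z)"
  by (induction S rule: infinite_finite_induct) (auto simp: eval_add)

lemma eval_single [simp]: "eval (Poly_Mapping.single \<alpha> c) z = c * mon z \<alpha>"
  by (cases "c = 0") (auto simp: eval_def)

lemma poly_decomp: "f = (\<Sum>\<alpha>\<in>Poly_Mapping.keys f. Poly_Mapping.single \<alpha> (Poly_Mapping.lookup f \<alpha>))"
proof (rule poly_mapping_eqI)
  fix k
  show "Poly_Mapping.lookup f k = Poly_Mapping.lookup (\<Sum>\<alpha>\<in>Poly_Mapping.keys f. Poly_Mapping.single \<alpha> (Poly_Mapping.lookup f \<alpha>)) k"
    by (cases "k \<in> Poly_Mapping.keys f") (auto simp: lookup_sum lookup_single when_def in_keys_iff)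
qed

lemma eval_mult: "eval (f * g) z = eval f z * eval g z"
proof -
  have "f * g = (\<Sum>\<alpha>\<in>Poly_Mapping.keys f. Poly_Mapping.single \<alpha> (Poly_Mapping.lookup f \<alpha>)) * (\<Sum>\<beta>\<in>Poly_Mapping.keys g. Poly_Mapping.single \<beta> (Poly_Mapping.lookup g \<beta>))"
    using poly_decomp[of f] poly_decomp[of g] by simp
  also have "\<dots> = (\<Sum>\<alpha>\<in>Poly_Mapping.keys f. \<Sum>\<beta>\<in>Poly_Mapping.keys g. Poly_Mapping.single (\<alpha> + \<beta>) (Poly_Mapping.lookup f \<alpha> * Poly_Mapping.lookup g \<beta>))"
    by (simp add: sum_product mult_single)
  finally have "eval (f * g) z = (\<Sum>\<alpha>\<in>Poly_Mapping.keys f. \<Sum>\<beta>\<in>Poly_Mapping.keys g. Poly_Mapping.lookup f \<alpha> * Poly_Mapping.lookup g \<beta> * mon z (\<alpha> + \<beta>))"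
    by (simp add: eval_sum)
  also have "\<dots> = (\<Sum>\<alpha>\<in>Poly_Mapping.keys f. Poly_Mapping.lookup f \<alpha> * mon z \<alpha>) * (\<Sum>\<beta>\<in>Poly_Mapping.keys g. Poly_Mapping.lookup g \<beta> * mon z \<beta>)"
    by (simp add: sum_product mon_add mult_ac)
  finally show ?thesis by (simp add: eval_def)
qed

lemma eval_one [simp]: "eval (1::('n::finite, 'k::comm_ring_1) mpoly) z = 1"
proof -
  have "(1::('n, 'k) mpoly) = Poly_Mapping.single 0 1"
    by (rule poly_mapping_eqI) (simp add: lookup_one lookup_single)
  moreover have "eval (Poly_Mapping.single 0 (1::'k)) z = 1"
    by (simp only: eval_single mon_zero mult_1)
  ultimately show ?thesis by simp
qed

lemma eval_var [simp]: "eval (var j) z = z j"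
proof -
  have "\<And>ja. z ja ^ (if j = ja then Suc 0 else 0) = (if j = ja then z ja else 1)" by simp
  then show ?thesis by (simp add: var_def mon_def lookup_single when_def)
qed

lemma lookup_torus_act: "Poly_Mapping.lookup (torus_act z f) \<alpha> = Poly_Mapping.lookup f \<alpha> * mon z \<alpha>"
  by (auto simp: torus_act_def lookup_mapp when_def mon_def in_keys_iff)

lemma eval_torus_act: "eval (torus_act z f) (\<lambda>_. 1) = eval f z"
proof -
  have "Poly_Mapping.keys (torus_act z f) \<subseteq> Poly_Mapping.keys f"
    by (simp add: torus_act_def keys_mapp_subset)
  then have "eval (torus_act z f) (\<lambda>_. 1) = (\<Sum>\<alpha>\<in>Poly_Mapping.keys f. Poly_Mapping.lookup (torus_act z f) \<alpha> * mon (\<lambda>_. 1) \<alpha>)"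
    by (intro eval_superset) auto
  then show ?thesis by (simp add: lookup_torus_act eval_def)
qed

lemma torus_act_compose: "torus_act z (torus_act w f) = torus_act (\<lambda>j. z j * w j) f"
  by (rule poly_mapping_eqI) (simp add: lookup_torus_act mon_def power_mult_distrib prod.distrib mult_ac)

lemma torus_act_one: "torus_act (\<lambda>_. 1) f = f"
  by (rule poly_mapping_eqI) (simp add: lookup_torus_act)

lemma max_ideal_one_eval:
  assumes "f \<in> (max_ideal_one :: ('n::finite, 'k::comm_ring_1) mpoly set)"
  shows "eval f (\<lambda>_. 1) = 0"
proof -
  let ?K = "{f :: ('n, 'k) mpoly. eval f (\<lambda>_. 1) = 0}"
  have "is_ideal ?K"
    unfolding is_ideal_def by (simp add: eval_add eval_mult)
  moreover have "range (\<lambda>j. var j - 1) \<subseteq> ?K"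
    by (auto simp: eval_diff)
  ultimately show ?thesis using assms unfolding max_ideal_one_def ideal_gen_def by blast
qed



definition const :: "'k \<Rightarrow> ('n, 'k::comm_ring_1) mpoly" where
  "const a = Poly_Mapping.single 0 a"

definition mono :: "(nat \<Rightarrow> 'a::comm_ring_1) \<Rightarrow> nat \<Rightarrow> (nat \<Rightarrow> nat) \<Rightarrow> 'a" where
  "mono w s \<mu> = (\<Prod>i<s. w i ^ \<mu> i)"

definition supp :: "nat \<Rightarrow> (nat \<Rightarrow> nat) set" where
  "supp s = {\<mu>. \<forall>i\<ge>s. \<mu> i = 0}"

definition indep :: "('n::finite, 'k::comm_ring_1) mpoly set \<Rightarrow> (nat \<Rightarrow> ('n, 'k) mpoly) \<Rightarrow> nat \<Rightarrow> bool" where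
  "indep Q w s \<longleftrightarrow> (\<forall>M c. finite M \<longrightarrow> M \<subseteq> supp s \<longrightarrow>
      (\<Sum>\<mu>\<in>M. const (c \<mu>) * mono w s \<mu>) \<in> Q \<longrightarrow> (\<forall>\<mu>\<in>M. c \<mu> = 0))"

lemma const_zero [simp]: "const 0 = 0"
  by (simp add: const_def)

lemma mono_Suc_upd: "mono (w(s:=g)) (Suc s) \<mu> = mono w s \<mu> * g ^ \<mu> s"
proof -
  have "(\<Prod>i<s. (w(s:=g)) i ^ \<mu> i) = (\<Prod>i<s. w i ^ \<mu> i)"
    by (rule prod.cong) auto
  then show ?thesis by (simp add: mono_def)
qed

lemma mono_upd: "mono w s (\<mu>(s:=e)) = mono w s \<mu>"
  unfolding mono_def by (rule prod.cong) auto

lemma indep_extend: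
  assumes Q: "is_prime_ideal Q" and Q': "is_ideal Q'" and ind: "indep Q' w s"
    and gQ': "g \<in> Q'" and gQ: "g \<notin> Q" and sub: "Q \<subseteq> Q'"
  shows "indep Q (w(s:=g)) (Suc s)"
  unfolding indep_def
proof (intro allI impI ballI)
  fix M c \<mu>0
  assume fin: "finite M" and Ms: "M \<subseteq> supp (Suc s)"
    and mem: "(\<Sum>\<mu>\<in>M. const (c \<mu>) * mono (w(s:=g)) (Suc s) \<mu>) \<in> Q" and \<mu>0: "\<mu>0 \<in> M"
  show "c \<mu>0 = 0"
  proof (rule ccontr)
    assume c0: "c \<mu>0 \<noteq> 0"
    define M' where "M' = {\<mu>\<in>M. c \<mu> \<noteq> 0}"
    have finM': "finite M'" using fin by (simp add: M'_def)
    have \<mu>0M': "\<mu>0 \<in> M'" using \<mu>0 c0 by (simp add: M'_def)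
    define e0 where "e0 = Min ((\<lambda>\<mu>. \<mu> s) ` M')"
    have e0le: "\<And>\<mu>. \<mu> \<in> M' \<Longrightarrow> e0 \<le> \<mu> s" using finM' by (simp add: e0_def)
    have "e0 \<in> (\<lambda>\<mu>. \<mu> s) ` M'" unfolding e0_def using finM' \<mu>0M' by (intro Min_in) auto
    then obtain \<mu>m where \<mu>m: "\<mu>m \<in> M'" "\<mu>m s = e0" by auto
    define S where "S = (\<Sum>\<mu>\<in>M'. const (c \<mu>) * (mono w s \<mu> * g ^ (\<mu> s - e0)))"
    have "(\<Sum>\<mu>\<in>M. const (c \<mu>) * mono (w(s:=g)) (Suc s) \<mu>) = (\<Sum>\<mu>\<in>M'. const (c \<mu>) * mono (w(s:=g)) (Suc s) \<mu>)"
      by (rule sum.mono_neutral_right) (use fin in \<open>auto simp: M'_def\<close>)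
    also have "\<dots> = g ^ e0 * S"
      unfolding S_def sum_distrib_left
    proof (rule sum.cong)
      fix \<mu> assume "\<mu> \<in> M'"
      then have "g ^ \<mu> s = g ^ e0 * g ^ (\<mu> s - e0)"
        using e0le by (metis le_add_diff_inverse power_add)
      then show "const (c \<mu>) * mono (w(s := g)) (Suc s) \<mu> = g ^ e0 * (const (c \<mu>) * (mono w s \<mu> * g ^ (\<mu> s - e0)))"
        by (simp add: mono_Suc_upd mult_ac)
    qed simp
    finally have "g ^ e0 * S \<in> Q" using mem by simp
    then have SQ: "S \<in> Q" using prime_mult[OF Q] prime_power_notin[OF Q gQ] by blast
    define M0 where "M0 = {\<mu>\<in>M'. \<mu> s = e0}"
    define S0 where "S0 = (\<Sum>\<mu>\<in>M0. const (c \<mu>) * mono w s \<mu>)"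
    define S1 where "S1 = (\<Sum>\<mu>\<in>M'-M0. const (c \<mu>) * (mono w s \<mu> * g ^ (\<mu> s - e0)))"
    have M0M': "M0 \<subseteq> M'" by (auto simp: M0_def)
    have "S = (\<Sum>\<mu>\<in>M'-M0. const (c \<mu>) * (mono w s \<mu> * g ^ (\<mu> s - e0))) + (\<Sum>\<mu>\<in>M0. const (c \<mu>) * (mono w s \<mu> * g ^ (\<mu> s - e0)))"
      unfolding S_def using sum.subset_diff[OF M0M' finM'] by simp
    also have "(\<Sum>\<mu>\<in>M0. const (c \<mu>) * (mono w s \<mu> * g ^ (\<mu> s - e0))) = S0"
      unfolding S0_def by (rule sum.cong) (auto simp: M0_def)
    finally have SS: "S = S1 + S0" by (simp add: S1_def)
    have S1Q': "S1 \<in> Q'"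
      unfolding S1_def
    proof (rule ideal_sum[OF Q'])
      fix \<mu> assume "\<mu> \<in> M' - M0"
      then have "e0 \<le> \<mu> s" "\<mu> s \<noteq> e0" using e0le by (auto simp: M0_def)
      then have "\<mu> s - e0 = Suc (\<mu> s - e0 - 1)" by linarith
      then have "const (c \<mu>) * (mono w s \<mu> * g ^ (\<mu> s - e0)) = (const (c \<mu>) * mono w s \<mu> * g ^ (\<mu> s - e0 - 1)) * g"
        by (metis (no_types, lifting) mult.assoc mult.commute power_Suc)
      then show "const (c \<mu>) * (mono w s \<mu> * g ^ (\<mu> s - e0)) \<in> Q'"
        using ideal_mult_left[OF Q' gQ'] by simp
    qed
    have S0Q': "S0 \<in> Q'"
    proof -
      have "S0 = S - S1" using SS by simp
      then show ?thesis using ideal_diff[OF Q'] SQ sub S1Q' by auto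
    qed
    define h where "h = (\<lambda>\<mu>::nat\<Rightarrow>nat. \<mu>(s:=0))"
    have injh: "inj_on h M0"
    proof (rule inj_onI)
      fix \<mu> \<nu> assume "\<mu> \<in> M0" "\<nu> \<in> M0" "h \<mu> = h \<nu>"
      show "\<mu> = \<nu>"
      proof (rule ext)
        fix i show "\<mu> i = \<nu> i"
        proof (cases "i = s")
          case True then show ?thesis using \<open>\<mu> \<in> M0\<close> \<open>\<nu> \<in> M0\<close> by (simp add: M0_def)
        next
          case False then show ?thesis using fun_cong[OF \<open>h \<mu> = h \<nu>\<close>, of i] by (simp add: h_def)
        qed
      qed
    qed
    have S0': "S0 = (\<Sum>\<nu>\<in>h`M0. const (c (\<nu>(s:=e0))) * mono w s \<nu>)"
    proof -
      have "(\<Sum>\<nu>\<in>h`M0. const (c (\<nu>(s:=e0))) * mono w s \<nu>) = (\<Sum>\<mu>\<in>M0. const (c ((h \<mu>)(s:=e0))) * mono w s (h \<mu>))"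
        by (simp add: sum.reindex[OF injh])
      also have "\<dots> = S0" unfolding S0_def
      proof (rule sum.cong[OF refl])
        fix \<mu> assume "\<mu> \<in> M0"
        then have "(h \<mu>)(s := e0) = \<mu>" by (auto simp: h_def M0_def)
        then show "const (c ((h \<mu>)(s := e0))) * mono w s (h \<mu>) = const (c \<mu>) * mono w s \<mu>"
          by (simp add: h_def mono_upd)
      qed
      finally show ?thesis by simp
    qed
    have hsupp: "h ` M0 \<subseteq> supp s"
    proof
      fix \<nu> assume "\<nu> \<in> h ` M0"
      then obtain \<mu> where "\<mu> \<in> M0" "\<nu> = h \<mu>" by auto
      then have "\<mu> \<in> supp (Suc s)" using Ms by (auto simp: M0_def M'_def)
      then show "\<nu> \<in> supp s" using \<open>\<nu> = h \<mu>\<close> by (auto simp: supp_def h_def)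
    qed
    have fin0: "finite (h ` M0)" using finM' M0M' by (meson finite_imageI finite_subset)
    have "\<forall>\<nu>\<in>h`M0. c (\<nu>(s:=e0)) = 0"
      using ind[unfolded indep_def, rule_format, of "h`M0" "\<lambda>\<nu>. c (\<nu>(s:=e0))"] fin0 hsupp S0Q' S0' by simp
    moreover have "\<mu>m \<in> M0" using \<mu>m by (simp add: M0_def)
    ultimately have "c ((h \<mu>m)(s:=e0)) = 0" by blast
    moreover have "(h \<mu>m)(s:=e0) = \<mu>m" using \<mu>m by (auto simp: h_def)
    ultimately show False using \<mu>m by (simp add: M'_def)
  qed
qed

lemma indep_chain:
  assumes primes: "\<forall>i\<le>k. is_prime_ideal (C i)" and strict: "\<forall>i<k. C i \<subset> C (Suc i)"
    and ind: "indep (C k) w s"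
  shows "\<exists>w'. indep (C 0) w' (s + k)"
proof -
  have "\<forall>i. i \<le> k \<longrightarrow> (\<exists>w'. indep (C (k - i)) w' (s + i))"
  proof
    fix i show "i \<le> k \<longrightarrow> (\<exists>w'. indep (C (k - i)) w' (s + i))"
    proof (induction i)
      case 0 show ?case using ind by auto
    next
      case (Suc i)
      show ?case
      proof
        assume le: "Suc i \<le> k"
        then obtain w' where w': "indep (C (k - i)) w' (s + i)" using Suc.IH by auto
        define q where "q = k - Suc i"
        have q: "Suc q = k - i" "q < k" using le by (auto simp: q_def)
        have "C q \<subset> C (k - i)" using strict q by metis
        then obtain g where g: "g \<in> C (k - i)" "g \<notin> C q" by blast
        have "indep (C q) (w'(s+i := g)) (Suc (s+i))"
        proof (rule indep_extend)
          show "is_prime_ideal (C q)" using primes q by simp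
          show "is_ideal (C (k - i))" using primes[rule_format, of "k-i"] prime_ideal_ideal by simp
          show "C q \<subseteq> C (k - i)" using \<open>C q \<subset> C (k - i)\<close> by blast
        qed (use w' g in auto)
        then show "\<exists>w'. indep (C (k - Suc i)) w' (s + Suc i)" unfolding q_def by auto
      qed
    qed
  qed
  then show ?thesis by (metis diff_self_eq_0 order_refl)
qed



lemma indep_trunc:
  assumes ind: "indep Q w s" and le: "s' \<le> s"
  shows "indep Q w s'"
  unfolding indep_def
proof (intro allI impI)
  fix M c assume fin: "finite M" and Ms: "M \<subseteq> supp s'" and mem: "(\<Sum>\<mu>\<in>M. const (c \<mu>) * mono w s' \<mu>) \<in> Q"
  have eq: "mono w s \<mu> = mono w s' \<mu>" if "\<mu> \<in> M" for \<mu>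
  proof -
    have "\<forall>i\<ge>s'. \<mu> i = 0" using Ms that by (auto simp: supp_def)
    then show ?thesis unfolding mono_def
      by (intro prod.mono_neutral_right) (use le in auto)
  qed
  have "M \<subseteq> supp s" using Ms le by (auto simp: supp_def)
  moreover have "(\<Sum>\<mu>\<in>M. const (c \<mu>) * mono w s \<mu>) \<in> Q"
    using mem eq by (simp cong: sum.cong)
  ultimately show "\<forall>\<mu>\<in>M. c \<mu> = 0" using ind fin unfolding indep_def by blast
qed

definition bnd :: "nat \<Rightarrow> ('n \<Rightarrow>\<^sub>0 nat) set" where
  "bnd a = {\<alpha>. \<forall>j. Poly_Mapping.lookup \<alpha> j \<le> a}"

lemma bnd_mono: "a \<le> b \<Longrightarrow> bnd a \<subseteq> bnd b"
  by (auto simp: bnd_def intro: order_trans)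

lemma keys_mult_bnd:
  assumes "Poly_Mapping.keys f \<subseteq> bnd a" "Poly_Mapping.keys g \<subseteq> bnd b"
  shows "Poly_Mapping.keys (f * g) \<subseteq> bnd (a + b)"
proof
  fix \<gamma> assume "\<gamma> \<in> Poly_Mapping.keys (f * g)"
  then obtain \<alpha> \<beta> where "\<gamma> = \<alpha> + \<beta>" "\<alpha> \<in> Poly_Mapping.keys f" "\<beta> \<in> Poly_Mapping.keys g"
    using keys_mult by blast
  moreover have "\<forall>j. Poly_Mapping.lookup \<alpha> j \<le> a" "\<forall>j. Poly_Mapping.lookup \<beta> j \<le> b"
    using assms calculation by (auto simp: bnd_def)
  ultimately show "\<gamma> \<in> bnd (a + b)" by (simp add: bnd_def lookup_add add_mono)
qed

lemma keys_power_bnd: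
  assumes "Poly_Mapping.keys (f::('n, 'k::comm_ring_1) mpoly) \<subseteq> bnd a"
  shows "Poly_Mapping.keys (f ^ m) \<subseteq> bnd (m * a)"
proof (induction m)
  case 0 then show ?case by (auto simp: bnd_def)
next
  case (Suc m) then show ?case using keys_mult_bnd[OF assms Suc.IH] by (simp add: add.commute)
qed

lemma keys_prod_bnd:
  fixes g :: "'i \<Rightarrow> ('n, 'k::comm_ring_1) mpoly"
  assumes "finite I" "\<And>i. i \<in> I \<Longrightarrow> Poly_Mapping.keys (g i) \<subseteq> bnd (b i)"
  shows "Poly_Mapping.keys (\<Prod>i\<in>I. g i) \<subseteq> bnd (\<Sum>i\<in>I. b i)"
  using assms
proof (induction I rule: finite_induct)
  case empty then show ?case by (auto simp: bnd_def)
next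
  case (insert x F) then show ?case using keys_mult_bnd[of "g x" "b x" "prod g F" "sum b F"] by simp
qed

lemma keys_bounded: "\<exists>a. Poly_Mapping.keys (f::('n::finite \<Rightarrow>\<^sub>0 nat) \<Rightarrow>\<^sub>0 'k::zero) \<subseteq> bnd a"
proof (intro exI subsetI)
  fix \<alpha> assume a: "\<alpha> \<in> Poly_Mapping.keys f"
  show "\<alpha> \<in> bnd (\<Sum>\<beta>\<in>Poly_Mapping.keys f. \<Sum>j\<in>UNIV. Poly_Mapping.lookup \<beta> j)"
  proof -
  have "\<forall>j. Poly_Mapping.lookup \<alpha> j \<le> (\<Sum>\<beta>\<in>Poly_Mapping.keys f. \<Sum>j\<in>UNIV. Poly_Mapping.lookup \<beta> j)"
  proof
    fix j
    have "Poly_Mapping.lookup \<alpha> j \<le> (\<Sum>j\<in>UNIV. Poly_Mapping.lookup \<alpha> j)"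
      using member_le_sum[of j UNIV "\<lambda>j. Poly_Mapping.lookup \<alpha> j"] by simp
    also have "\<dots> \<le> (\<Sum>\<beta>\<in>Poly_Mapping.keys f. \<Sum>j\<in>UNIV. Poly_Mapping.lookup \<beta> j)"
      using member_le_sum[OF a, of "\<lambda>\<beta>. \<Sum>j\<in>UNIV. Poly_Mapping.lookup \<beta> j"] by simp
    finally show "Poly_Mapping.lookup \<alpha> j \<le> (\<Sum>\<beta>\<in>Poly_Mapping.keys f. \<Sum>j\<in>UNIV. Poly_Mapping.lookup \<beta> j)" .
  qed
  then show ?thesis by (simp add: bnd_def)
  qed
qed

lemma finite_card_bnd: "finite (bnd N :: ('n::finite \<Rightarrow>\<^sub>0 nat) set) \<and> card (bnd N :: ('n \<Rightarrow>\<^sub>0 nat) set) \<le> (Suc N) ^ card (UNIV::'n set)"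
proof -
  have inj: "inj_on Poly_Mapping.lookup (bnd N :: ('n \<Rightarrow>\<^sub>0 nat) set)"
    by (rule inj_onI) (rule poly_mapping_eqI, simp)
  have sub: "Poly_Mapping.lookup ` (bnd N :: ('n \<Rightarrow>\<^sub>0 nat) set) \<subseteq> (\<Pi>\<^sub>E j\<in>UNIV. {..N})"
    by (auto simp: bnd_def)
  have fin: "finite (\<Pi>\<^sub>E j\<in>(UNIV::'n set). {..N})" by (simp add: finite_PiE)
  have "card (\<Pi>\<^sub>E j\<in>(UNIV::'n set). {..N}) = (Suc N) ^ card (UNIV::'n set)"
    by (simp add: card_PiE prod_constant)
  then show ?thesis using inj_on_finite[OF inj sub fin] card_inj_on_le[OF inj sub fin] by simp
qed

definition sc :: "'k \<Rightarrow> ('n, 'k::field) mpoly \<Rightarrow> ('n, 'k) mpoly" where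
  "sc a f = const a * f"

lemma vs_sc: "vector_space (sc :: 'k::field \<Rightarrow> ('n, 'k) mpoly \<Rightarrow> ('n, 'k) mpoly)"
  unfolding vector_space_def sc_def const_def
  by (simp add: distrib_left single_add distrib_right mult.assoc[symmetric] mult_single)

interpretation vs: vector_space "sc :: 'k::field \<Rightarrow> ('n, 'k) mpoly \<Rightarrow> ('n, 'k) mpoly"
  by (rule vs_sc)

lemma in_span_bnd:
  assumes "Poly_Mapping.keys (f::('n, 'k::field) mpoly) \<subseteq> bnd N"
  shows "f \<in> vs.span ((\<lambda>\<alpha>. Poly_Mapping.single \<alpha> 1) ` bnd N)"
proof -
  have "f = (\<Sum>\<alpha>\<in>Poly_Mapping.keys f. sc (Poly_Mapping.lookup f \<alpha>) (Poly_Mapping.single \<alpha> 1))"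
    by (subst poly_decomp) (simp add: sc_def const_def mult_single)
  also have "\<dots> \<in> vs.span ((\<lambda>\<alpha>. Poly_Mapping.single \<alpha> 1) ` bnd N)"
    by (intro vs.span_sum vs.span_scale vs.span_base) (use assms in auto)
  finally show ?thesis .
qed

lemma count_ineq:
  fixes K n :: nat assumes "K \<ge> 1"
  shows "(K * K ^ n + 1) ^ n < (K ^ n + 1) ^ Suc n"
proof -
  let ?d = "K ^ n"
  have "K * ?d + 1 \<le> K * (?d + 1)" using assms by simp
  then have "(K * ?d + 1) ^ n \<le> (K * (?d + 1)) ^ n" by (rule power_mono) simp
  also have "\<dots> = ?d * (?d + 1) ^ n" by (simp only: power_mult_distrib)
  also have "\<dots> < (?d + 1) * (?d + 1) ^ n"
    using assms by simp
  finally show ?thesis by simp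
qed



lemma not_indep_big:
  fixes w :: "nat \<Rightarrow> ('n::finite, 'k::field) mpoly"
  assumes Q0: "0 \<in> Q"
  shows "\<not> indep Q w (Suc (card (UNIV::'n set)))"
proof
  define n where "n = card (UNIV::'n set)"
  define s where "s = Suc n"
  assume "indep Q w (Suc (card (UNIV::'n set)))"
  then have ind: "indep Q w s" by (simp add: s_def n_def)
  have "\<forall>i. \<exists>b. Poly_Mapping.keys (w i) \<subseteq> bnd b" using keys_bounded by blast
  then obtain a where a: "\<forall>i. Poly_Mapping.keys (w i) \<subseteq> bnd (a i)" using choice[of "\<lambda>i b. Poly_Mapping.keys (w i) \<subseteq> bnd b"] by blast
  define D where "D = Suc (\<Sum>i<s. a i)"
  have aD: "Poly_Mapping.keys (w i) \<subseteq> bnd D" if "i < s" for i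
  proof -
    have "a i \<le> (\<Sum>i<s. a i)" using member_le_sum[of i "{..<s}" a] that by simp
    then have "a i \<le> D" by (simp add: D_def)
    then show ?thesis using a bnd_mono by blast
  qed
  define K where "K = s * D"
  have K1: "K \<ge> 1" by (simp add: K_def s_def D_def)
  define d where "d = K ^ n"
  define PE where "PE = (\<Pi>\<^sub>E i\<in>{..<s}. {..d})"
  define ext where "ext = (\<lambda>f::nat\<Rightarrow>nat. \<lambda>i. if i < s then f i else 0)"
  define Mu where "Mu = ext ` PE"
  have injext: "inj_on ext PE"
  proof (rule inj_onI)
    fix f g assume f: "f \<in> PE" and g: "g \<in> PE" and eq: "ext f = ext g"
    show "f = g"
    proof (rule PiE_ext[OF f[unfolded PE_def] g[unfolded PE_def]])
      fix i assume "i \<in> {..<s}"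
      then show "f i = g i" using fun_cong[OF eq, of i] by (simp add: ext_def)
    qed
  qed
  have finPE: "finite PE" by (simp add: PE_def finite_PiE)
  have cardMu: "card Mu = Suc d ^ s"
  proof -
    have "card Mu = card PE" unfolding Mu_def by (rule card_image[OF injext])
    also have "\<dots> = Suc d ^ s" by (simp add: PE_def card_PiE prod_constant)
    finally show ?thesis .
  qed
  have finMu: "finite Mu" using finPE by (simp add: Mu_def)
  have Mu_supp: "Mu \<subseteq> supp s" by (auto simp: Mu_def ext_def supp_def)
  have Mu_bound: "\<mu> i \<le> d" if "\<mu> \<in> Mu" "i < s" for \<mu> i
    using that by (auto simp: Mu_def ext_def PE_def PiE_def Pi_def)
  have keys_mono: "Poly_Mapping.keys (mono w s \<mu>) \<subseteq> bnd (K * d)" if "\<mu> \<in> Mu" for \<mu>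
  proof -
    have "Poly_Mapping.keys (mono w s \<mu>) \<subseteq> bnd (\<Sum>i<s. \<mu> i * D)"
      unfolding mono_def
      by (rule keys_prod_bnd) (use keys_power_bnd[OF aD] in auto)
    moreover have "(\<Sum>i<s. \<mu> i * D) \<le> (\<Sum>i<s. d * D)"
      by (rule sum_mono) (use Mu_bound[OF that] in simp)
    moreover have "(\<Sum>i<s. d * D) = K * d" by (simp add: K_def)
    ultimately show ?thesis using bnd_mono by (metis order_trans)
  qed
  show False
  proof (cases "inj_on (mono w s) Mu")
    case False
    then obtain \<mu>1 \<mu>2 where m: "\<mu>1 \<in> Mu" "\<mu>2 \<in> Mu" "\<mu>1 \<noteq> \<mu>2" "mono w s \<mu>1 = mono w s \<mu>2"
      unfolding inj_on_def by blast
    define c where "c = (\<lambda>\<mu>. if \<mu> = \<mu>1 then (1::'k) else -1)"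
    have "(\<Sum>\<mu>\<in>{\<mu>1, \<mu>2}. const (c \<mu>) * mono w s \<mu>) = 0"
      using m by (simp add: c_def const_def single_uminus)
    moreover have "{\<mu>1, \<mu>2} \<subseteq> supp s" using m Mu_supp by auto
    ultimately have "c \<mu>1 = 0"
      using ind[unfolded indep_def, rule_format, of "{\<mu>1, \<mu>2}" c \<mu>1] Q0 by simp
    then show False by (simp add: c_def)
  next
    case True
    define V where "V = mono w s ` Mu"
    have cardV: "card V = Suc d ^ s" using cardMu True by (simp add: V_def card_image)
    define E where "E = (\<lambda>\<alpha>. Poly_Mapping.single \<alpha> (1::'k)) ` (bnd (K * d) :: ('n \<Rightarrow>\<^sub>0 nat) set)"
    have finE: "finite E" and cardE: "card E \<le> Suc (K * d) ^ n"
      using finite_card_bnd[where N = "K * d" and 'n = 'n] card_image_le[of "bnd (K*d) :: ('n \<Rightarrow>\<^sub>0 nat) set" "\<lambda>\<alpha>. Poly_Mapping.single \<alpha> (1::'k)"]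
      by (auto simp: E_def n_def)
    have span: "V \<subseteq> vs.span E"
    proof
      fix v assume "v \<in> V"
      then obtain \<mu> where "\<mu> \<in> Mu" "v = mono w s \<mu>" by (auto simp: V_def)
      then show "v \<in> vs.span E" unfolding E_def using in_span_bnd[OF keys_mono] by simp
    qed
    have indV: "vs.independent V"
      unfolding vs.independent_explicit_finite_subsets
    proof (intro allI impI ballI)
      fix T u v assume TV: "T \<subseteq> V" and finT: "finite T" and sum0: "(\<Sum>v\<in>T. sc (u v) v) = 0" and vT: "v \<in> T"
      define M where "M = {\<mu>\<in>Mu. mono w s \<mu> \<in> T}"
      have TM: "T = mono w s ` M" using TV by (auto simp: M_def V_def)
      have injM: "inj_on (mono w s) M" using True by (rule inj_on_subset) (auto simp: M_def)
      have "(\<Sum>\<mu>\<in>M. const (u (mono w s \<mu>)) * mono w s \<mu>) = (\<Sum>v\<in>T. sc (u v) v)"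
        unfolding TM sum.reindex[OF injM] by (simp add: sc_def)
      then have "(\<Sum>\<mu>\<in>M. const (u (mono w s \<mu>)) * mono w s \<mu>) \<in> Q" using sum0 Q0 by simp
      moreover have "finite M" using finMu by (simp add: M_def)
      moreover have "M \<subseteq> supp s" using Mu_supp by (auto simp: M_def)
      ultimately have "\<forall>\<mu>\<in>M. u (mono w s \<mu>) = 0"
        using ind[unfolded indep_def, rule_format, of M "\<lambda>\<mu>. u (mono w s \<mu>)"] by blast
      then show "u v = 0" using vT TM by auto
    qed
    have "card V \<le> card E" using vs.independent_span_bound[OF finE indV span] by simp
    then have "Suc d ^ Suc n \<le> Suc (K * d) ^ n" using cardV cardE s_def by simp
    moreover have "(K * K ^ n + 1) ^ n < (K ^ n + 1) ^ Suc n" by (rule count_ineq[OF K1])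
    ultimately show False by (simp add: d_def)
  qed
qed



lemma artin:
  fixes \<chi> :: "'i \<Rightarrow> 'a \<Rightarrow> 'k::field" and op :: "'a \<Rightarrow> 'a \<Rightarrow> 'a"
  assumes e: "e \<in> A" and cl: "\<And>a b. a \<in> A \<Longrightarrow> b \<in> A \<Longrightarrow> op a b \<in> A"
    and hom: "\<And>\<mu> a b. a \<in> A \<Longrightarrow> b \<in> A \<Longrightarrow> \<chi> \<mu> (op a b) = \<chi> \<mu> a * \<chi> \<mu> b"
    and one: "\<And>\<mu>. \<chi> \<mu> e = 1"
    and fin: "finite M"
    and dist: "\<forall>\<mu>\<in>M. \<forall>\<nu>\<in>M. \<mu> \<noteq> \<nu> \<longrightarrow> (\<exists>a\<in>A. \<chi> \<mu> a \<noteq> \<chi> \<nu> a)"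
    and zero: "\<forall>a\<in>A. (\<Sum>\<mu>\<in>M. c \<mu> * \<chi> \<mu> a) = 0"
  shows "\<forall>\<mu>\<in>M. c \<mu> = 0"
  using fin dist zero
proof (induction M arbitrary: c rule: finite_induct)
  case empty then show ?case by simp
next
  case (insert \<nu> F)
  have IH: "\<forall>\<mu>\<in>F. c' \<mu> = 0" if "\<forall>a\<in>A. (\<Sum>\<mu>\<in>F. c' \<mu> * \<chi> \<mu> a) = 0" for c'
    using insert.IH[of c'] insert.prems(1) that by blast
  have sF: "\<forall>a\<in>A. (\<Sum>\<mu>\<in>F. c \<mu> * \<chi> \<mu> a) + c \<nu> * \<chi> \<nu> a = 0"
    using insert.prems(2) insert.hyps by (simp add: add.commute)
  have cF: "\<forall>\<mu>\<in>F. c \<mu> = 0"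
  proof
    fix \<mu> assume \<mu>F: "\<mu> \<in> F"
    have \<mu>\<nu>: "\<mu> \<noteq> \<nu>" using insert.hyps \<mu>F by auto
    obtain b where b: "b \<in> A" "\<chi> \<mu> b \<noteq> \<chi> \<nu> b"
      using insert.prems(1) \<mu>F \<mu>\<nu> by blast
    have "\<forall>a\<in>A. (\<Sum>\<mu>'\<in>F. (c \<mu>' * (\<chi> \<mu>' b - \<chi> \<nu> b)) * \<chi> \<mu>' a) = 0"
    proof
      fix a assume a: "a \<in> A"
      have 1: "(\<Sum>\<mu>'\<in>F. c \<mu>' * \<chi> \<mu>' (op a b)) + c \<nu> * \<chi> \<nu> (op a b) = 0"
        using sF cl[OF a b(1)] by blast
      have 2: "(\<Sum>\<mu>'\<in>F. c \<mu>' * \<chi> \<mu>' a) + c \<nu> * \<chi> \<nu> a = 0" using sF a by blast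
      have "(\<Sum>\<mu>'\<in>F. (c \<mu>' * (\<chi> \<mu>' b - \<chi> \<nu> b)) * \<chi> \<mu>' a)
          = (\<Sum>\<mu>'\<in>F. c \<mu>' * \<chi> \<mu>' (op a b)) - \<chi> \<nu> b * (\<Sum>\<mu>'\<in>F. c \<mu>' * \<chi> \<mu>' a)"
        using hom[OF a b(1)] by (simp add: algebra_simps sum_distrib_left sum_subtractf)
      also have "\<dots> = ((\<Sum>\<mu>'\<in>F. c \<mu>' * \<chi> \<mu>' (op a b)) + c \<nu> * \<chi> \<nu> (op a b))
           - \<chi> \<nu> b * ((\<Sum>\<mu>'\<in>F. c \<mu>' * \<chi> \<mu>' a) + c \<nu> * \<chi> \<nu> a)"
        using hom[OF a b(1)] by (simp add: algebra_simps)
      finally show "(\<Sum>\<mu>'\<in>F. (c \<mu>' * (\<chi> \<mu>' b - \<chi> \<nu> b)) * \<chi> \<mu>' a) = 0" using 1 2 by simp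
    qed
    then have "c \<mu> * (\<chi> \<mu> b - \<chi> \<nu> b) = 0" using IH[of "\<lambda>\<mu>'. c \<mu>' * (\<chi> \<mu>' b - \<chi> \<nu> b)"] \<mu>F by blast
    then show "c \<mu> = 0" using b by simp
  qed
  then have "\<forall>a\<in>A. c \<nu> * \<chi> \<nu> a = 0" using sF by simp
  then have "c \<nu> = 0" using e one[of \<nu>] by force
  with cF show ?case by simp
qed

lemma lattice_complement:
  fixes B :: "('n::finite \<Rightarrow> int) set"
  assumes notind: "\<not> Z_indep_family B r"
  shows "\<exists>J. card (UNIV::'n set) < card J + r \<and> (\<forall>b\<in>B. (\<forall>j. j \<notin> J \<longrightarrow> b j = 0) \<longrightarrow> (\<forall>j. b j = 0))"
proof -
  define good where "good J \<longleftrightarrow> (\<forall>b\<in>B. (\<forall>j. j \<notin> J \<longrightarrow> b j = 0) \<longrightarrow> (\<forall>j. b j = 0))" for J :: "'n set"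
  have g0: "good {}" by (simp add: good_def)
  have bnd: "\<forall>y. good y \<longrightarrow> card y < Suc (card (UNIV::'n set))"
    by (simp add: card_mono less_Suc_eq_le)
  obtain J where gJ: "good J" and maxJ: "\<forall>J'. good J' \<longrightarrow> card J' \<le> card J"
    using ex_has_greatest_nat[of good "{}" card, OF g0 bnd] by blast
  have "\<forall>j\<in>-J. \<exists>b. b \<in> B \<and> (\<forall>i. i \<notin> insert j J \<longrightarrow> b i = 0) \<and> b j \<noteq> 0"
  proof
    fix j assume "j \<in> - J"
    then have jJ: "j \<notin> J" by simp
    have "card (insert j J) = Suc (card J)" using jJ by simp
    then have "\<not> good (insert j J)" using maxJ by (metis Suc_n_not_le_n)
    then obtain b where b: "b \<in> B" "\<forall>i. i \<notin> insert j J \<longrightarrow> b i = 0" "\<exists>i. b i \<noteq> 0"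
      unfolding good_def by blast
    have "b j \<noteq> 0"
    proof
      assume "b j = 0"
      then have "\<forall>i. i \<notin> J \<longrightarrow> b i = 0" using b(2) by auto
      then show False using gJ b(1,3) unfolding good_def by blast
    qed
    then show "\<exists>b. b \<in> B \<and> (\<forall>i. i \<notin> insert j J \<longrightarrow> b i = 0) \<and> b j \<noteq> 0" using b by blast
  qed
  then obtain bb where bb: "\<forall>j\<in>-J. bb j \<in> B \<and> (\<forall>i. i \<notin> insert j J \<longrightarrow> bb j i = 0) \<and> bb j j \<noteq> 0"
    by metis
  have "card (UNIV::'n set) < card J + r"
  proof (rule ccontr)
    assume "\<not> card (UNIV::'n set) < card J + r"
    moreover have "card (- J) = card (UNIV::'n set) - card J"
      using card_Diff_subset[of J UNIV] by (simp add: Compl_eq_Diff_UNIV)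
    ultimately have "r \<le> card (- J)" by simp
    then obtain L where L: "L \<subseteq> - J" "card L = r" "finite L"
      by (rule obtain_subset_with_card_n)
    obtain e where e: "bij_betw e {0..<card L} L" using ex_bij_betw_nat_finite[OF L(3)] by blast
    have eL: "e i \<in> L" if "i < r" for i using e that L(2) by (auto simp: bij_betw_def)
    have einj: "e i = e k \<Longrightarrow> i < r \<Longrightarrow> k < r \<Longrightarrow> i = k" for i k
      using e L(2) by (auto simp: bij_betw_def inj_on_def)
    have "Z_indep_family B r"
      unfolding Z_indep_family_def
    proof (intro exI conjI allI impI)
      fix i assume "i < r"
      then show "bb (e i) \<in> B" using bb eL L(1) by blast
    next
      fix c :: "nat \<Rightarrow> int" and k
      assume rel: "\<forall>j. (\<Sum>i<r. c i * bb (e i) j) = 0" and k: "k < r"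
      have ekJ: "e k \<in> - J" using eL[OF k] L(1) by blast
      have "(\<Sum>i<r. c i * bb (e i) (e k)) = (\<Sum>i<r. if i = k then c i * bb (e i) (e k) else 0)"
      proof (rule sum.cong[OF refl])
        fix i assume i: "i \<in> {..<r}"
        show "c i * bb (e i) (e k) = (if i = k then c i * bb (e i) (e k) else 0)"
        proof (cases "i = k")
          case False
          then have "e k \<noteq> e i" using einj[of k i] i k by auto
          moreover have "e i \<in> - J" using eL[of i] i L(1) by auto
          ultimately have "bb (e i) (e k) = 0" using bb ekJ by auto
          then show ?thesis using False by simp
        qed simp
      qed
      also have "\<dots> = c k * bb (e k) (e k)" using k by simp
      finally have "c k * bb (e k) (e k) = 0" using rel by simp
      moreover have "bb (e k) (e k) \<noteq> 0" using bb ekJ by blast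
      ultimately show "c k = 0" by simp
    qed
    then show False using notind by simp
  qed
  then show ?thesis using gJ unfolding good_def by blast
qed



lemma prod_power_int: "(\<Prod>i\<in>I. f i) powi n = (\<Prod>i\<in>I. (f i :: 'k::field) powi n)"
  by (induction I rule: infinite_finite_induct) (auto simp: power_int_mult_distrib)

lemma tpow_nonzero: "\<forall>i j. x i j \<noteq> 0 \<Longrightarrow> tpow x a j \<noteq> 0"
  by (simp add: tpow_def)

lemma tpow_add: "\<forall>i j. x i j \<noteq> 0 \<Longrightarrow> tpow x (\<lambda>i. a i + b i) = (\<lambda>j. tpow x a j * tpow x b j)"
  by (simp add: tpow_def power_int_add prod.distrib fun_eq_iff)

lemma tpow_zero: "tpow x (\<lambda>_. 0) = (\<lambda>_. 1)"
  by (simp add: tpow_def fun_eq_iff)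

lemma Stab_zero: "(\<lambda>_. 0) \<in> Stab x P"
  by (simp add: Stab_def tpow_zero torus_act_one)

lemma Stab_add:
  assumes x: "\<forall>i j. x i j \<noteq> 0" and a: "a \<in> Stab x P" and b: "b \<in> Stab x P"
  shows "(\<lambda>i. a i + b i) \<in> Stab x P"
proof -
  have "torus_act (tpow x (\<lambda>i. a i + b i)) ` P = torus_act (tpow x a) ` (torus_act (tpow x b) ` P)"
    by (simp add: tpow_add[OF x] image_image torus_act_compose)
  also have "\<dots> = P" using a b by (simp add: Stab_def)
  finally show ?thesis by (simp add: Stab_def)
qed

lemma Stab_eval:
  assumes "f \<in> P" "a \<in> Stab x P" "P \<subseteq> max_ideal_one"
  shows "eval f (tpow x a) = 0"
proof -
  have "torus_act (tpow x a) f \<in> P" using assms(1,2) unfolding Stab_def by blast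
  then have "eval (torus_act (tpow x a) f) (\<lambda>_. 1) = 0" using assms(3) max_ideal_one_eval by blast
  then show ?thesis by (simp add: eval_torus_act)
qed

lemma mon_tpow_add: "\<forall>i j. x i j \<noteq> 0 \<Longrightarrow> mon (tpow x (\<lambda>i. a i + b i)) \<beta> = mon (tpow x a) \<beta> * mon (tpow x b) \<beta>"
  by (simp add: tpow_add mon_def power_mult_distrib prod.distrib)

lemma mon_tpow_zero: "mon (tpow x (\<lambda>_. 0)) \<beta> = 1"
  by (simp add: tpow_zero)

lemma pairing_eq: "pairing x a b = (\<Prod>j\<in>UNIV. tpow x a j powi b j)"
  unfolding pairing_def tpow_def prod_power_int
  by (subst prod.swap) (simp add: power_int_mult)

lemma mon_nonzero: "\<forall>j. z j \<noteq> (0::'k::field) \<Longrightarrow> mon z \<beta> \<noteq> 0"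
  by (simp add: mon_def)

lemma char_eq_in_B:
  assumes x: "\<forall>i j. x i j \<noteq> 0" and eq: "mon (tpow x a) \<beta> = mon (tpow x a) \<beta>'"
  shows "pairing x a (\<lambda>j. int (Poly_Mapping.lookup \<beta> j) - int (Poly_Mapping.lookup \<beta>' j)) = 1"
proof -
  have nz: "\<forall>j. tpow x a j \<noteq> 0" using tpow_nonzero[OF x] by blast
  have "pairing x a (\<lambda>j. int (Poly_Mapping.lookup \<beta> j) - int (Poly_Mapping.lookup \<beta>' j))
      = (\<Prod>j\<in>UNIV. tpow x a j ^ Poly_Mapping.lookup \<beta> j / tpow x a j ^ Poly_Mapping.lookup \<beta>' j)"
    unfolding pairing_eq using nz by (simp add: power_int_diff)
  also have "\<dots> = mon (tpow x a) \<beta> / mon (tpow x a) \<beta>'"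
    by (simp add: prod_dividef mon_def)
  also have "\<dots> = 1" using eq mon_nonzero[OF nz] by simp
  finally show ?thesis .
qed

lemma var_power: "(var j :: ('n, 'k::comm_ring_1) mpoly) ^ m = Poly_Mapping.single (Poly_Mapping.single j m) 1"
proof (induction m)
  case 0 then show ?case by simp
next
  case (Suc m) then show ?case by (simp add: var_def mult_single single_add[symmetric])
qed

lemma prod_single: "(\<Prod>i\<in>I. Poly_Mapping.single (f i) (1::'k::comm_ring_1)) = Poly_Mapping.single (\<Sum>i\<in>I. f i) 1"
  by (induction I rule: infinite_finite_induct) (auto simp: mult_single)



lemma vars_indep:
  fixes x :: "'m::finite \<Rightarrow> 'n::finite \<Rightarrow> 'k::field"
  assumes x: "\<forall>i j. x i j \<noteq> 0" and sub: "P \<subseteq> max_ideal_one"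
    and good: "\<forall>b\<in>B. (\<forall>j. j \<notin> J \<longrightarrow> b j = 0) \<longrightarrow> (\<forall>j. b j = 0)"
    and Bdef: "B = {b. \<forall>a\<in>Stab x P. pairing x a b = 1}"
    and e: "bij_betw e {0..<card J} J"
  shows "indep P (\<lambda>i. var (e i)) (card J)"
  unfolding indep_def
proof (intro allI impI)
  fix M c
  assume fin: "finite M" and Ms: "M \<subseteq> supp (card J)"
    and mem: "(\<Sum>\<mu>\<in>M. const (c \<mu>) * mono (\<lambda>i. var (e i)) (card J) \<mu>) \<in> P"
  define s where "s = card J"
  define \<gamma> where "\<gamma> \<mu> = (\<Sum>i<s. Poly_Mapping.single (e i) (\<mu> i))" for \<mu> :: "nat \<Rightarrow> nat"
  have mono_eq: "mono (\<lambda>i. var (e i)) s \<mu> = Poly_Mapping.single (\<gamma> \<mu>) (1::'k)" for \<mu>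
    unfolding mono_def \<gamma>_def by (simp add: var_power prod_single)
  have trm: "const (c \<mu>) * Poly_Mapping.single (\<gamma> \<mu>) 1 = Poly_Mapping.single (\<gamma> \<mu>) (c \<mu>)" for \<mu>
    by (simp add: const_def mult_single)
  have zero: "\<forall>a\<in>Stab x P. (\<Sum>\<mu>\<in>M. c \<mu> * mon (tpow x a) (\<gamma> \<mu>)) = 0"
  proof
    fix a assume a: "a \<in> Stab x P"
    have "eval (\<Sum>\<mu>\<in>M. const (c \<mu>) * mono (\<lambda>i. var (e i)) (card J) \<mu>) (tpow x a) = 0"
      by (rule Stab_eval[OF mem a sub])
    then show "(\<Sum>\<mu>\<in>M. c \<mu> * mon (tpow x a) (\<gamma> \<mu>)) = 0"
      by (simp add: eval_sum mono_eq[unfolded s_def] trm)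
  qed
  have einj: "inj_on e {0..<s}" and eJ: "e ` {0..<s} = J" using e by (auto simp: bij_betw_def s_def)
  have look_in: "Poly_Mapping.lookup (\<gamma> \<mu>) (e i) = \<mu> i" if i: "i < s" for \<mu> i
  proof -
    have "Poly_Mapping.lookup (\<gamma> \<mu>) (e i) = (\<Sum>i'<s. if i' = i then \<mu> i' else 0)"
      unfolding \<gamma>_def lookup_sum
    proof (rule sum.cong[OF refl])
      fix i' assume "i' \<in> {..<s}"
      then have "e i' = e i \<longleftrightarrow> i' = i" using einj i by (auto simp: inj_on_def)
      then show "Poly_Mapping.lookup (Poly_Mapping.single (e i') (\<mu> i')) (e i) = (if i' = i then \<mu> i' else 0)"
        by (simp add: lookup_single when_def)
    qed
    then show ?thesis using i by simp
  qed
  have look_out: "Poly_Mapping.lookup (\<gamma> \<mu>) j = 0" if j: "j \<notin> J" for \<mu> j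
  proof -
    have "e i \<noteq> j" if "i < s" for i using eJ that j by auto
    then show ?thesis unfolding \<gamma>_def lookup_sum by (simp add: lookup_single when_def)
  qed
  have dist: "\<forall>\<mu>\<in>M. \<forall>\<nu>\<in>M. \<mu> \<noteq> \<nu> \<longrightarrow> (\<exists>a\<in>Stab x P. mon (tpow x a) (\<gamma> \<mu>) \<noteq> mon (tpow x a) (\<gamma> \<nu>))"
  proof (intro ballI impI)
    fix \<mu> \<nu> assume \<mu>: "\<mu> \<in> M" and \<nu>: "\<nu> \<in> M" and ne: "\<mu> \<noteq> \<nu>"
    show "\<exists>a\<in>Stab x P. mon (tpow x a) (\<gamma> \<mu>) \<noteq> mon (tpow x a) (\<gamma> \<nu>)"
    proof (rule ccontr)
      assume "\<not> ?thesis"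
      then have all: "\<forall>a\<in>Stab x P. mon (tpow x a) (\<gamma> \<mu>) = mon (tpow x a) (\<gamma> \<nu>)" by blast
      define b where "b = (\<lambda>j. int (Poly_Mapping.lookup (\<gamma> \<mu>) j) - int (Poly_Mapping.lookup (\<gamma> \<nu>) j))"
      have "b \<in> B" unfolding Bdef b_def using char_eq_in_B[OF x] all by blast
      moreover have "\<forall>j. j \<notin> J \<longrightarrow> b j = 0" by (simp add: b_def look_out)
      ultimately have b0: "\<forall>j. b j = 0" using good by blast
      have "\<mu> = \<nu>"
      proof
        fix i show "\<mu> i = \<nu> i"
        proof (cases "i < s")
          case True
          then show ?thesis using b0[rule_format, of "e i"] look_in[OF True] by (simp add: b_def)
        next
          case False
          have "\<mu> \<in> supp (card J)" "\<nu> \<in> supp (card J)" using Ms \<mu> \<nu> by auto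
          then show ?thesis using False by (simp add: supp_def s_def)
        qed
      qed
      then show False using ne by simp
    qed
  qed
  show "\<forall>\<mu>\<in>M. c \<mu> = 0"
  proof (rule artin[where A = "Stab x P" and op = "\<lambda>a b i. a i + b i" and e = "\<lambda>_. 0"
        and \<chi> = "\<lambda>\<mu> a. mon (tpow x a) (\<gamma> \<mu>)"])
    show "(\<lambda>_. 0) \<in> Stab x P" by (rule Stab_zero)
  qed (use Stab_add[OF x] mon_tpow_add[OF x] mon_tpow_zero fin dist zero in auto)
qed

lemma height_chain:
  assumes h: "ideal_height P = enat n'" and p: "is_prime_ideal P"
  shows "prime_chain_ending P n'"
proof -
  define S where "S = {enat k | k. prime_chain_ending P k}"
  have SupS: "Sup S = enat n'" using h by (simp add: ideal_height_def S_def)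
  have "S \<subseteq> enat ` {..n'}"
  proof
    fix y assume y: "y \<in> S"
    then have "y \<le> enat n'" using SupS Sup_upper by metis
    moreover obtain k where "y = enat k" using y by (auto simp: S_def)
    ultimately show "y \<in> enat ` {..n'}" by auto
  qed
  then have finS: "finite S" using finite_subset by blast
  have "prime_chain_ending P 0" unfolding prime_chain_ending_def
    by (rule exI[of _ "\<lambda>_. P"]) (simp add: p)
  then have neS: "S \<noteq> {}" by (auto simp: S_def)
  have "Sup S \<in> S" using cSup_eq_Max[OF finS neS] Max_in[OF finS neS] by simp
  then show ?thesis using SupS by (auto simp: S_def)
qed

theorem lemma5p9:
  fixes x :: "'m::finite \<Rightarrow> 'n::finite \<Rightarrow> 'k::field_char_0"
    and P :: "('n, 'k) mpoly set"
    and n' :: nat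
  assumes "\<forall>i j. x i j \<noteq> 0"
    and "is_prime_ideal P"
    and "P \<subseteq> max_ideal_one"
    and "ideal_height P = enat n'"
  shows "\<exists>B :: ('n \<Rightarrow> int) set. is_subgroup B \<and> Z_rank B \<ge> enat n' \<and>
           (\<forall>a\<in>Stab x P. \<forall>b\<in>B. pairing x a b = 1)"
proof -
  note x = assms(1)
  define B where "B = {b. \<forall>a\<in>Stab x P. pairing x a b = 1}"
  have nz: "\<forall>j. tpow x a j \<noteq> 0" for a using tpow_nonzero[OF x] by blast
  have sg: "is_subgroup B"
    unfolding is_subgroup_def B_def
  proof (intro conjI ballI CollectI)
    fix a show "pairing x a (\<lambda>j. 0) = 1" by (simp add: pairing_eq)
  next
    fix b b' a assume b: "b \<in> {b. \<forall>a\<in>Stab x P. pairing x a b = 1}" and b': "b' \<in> {b. \<forall>a\<in>Stab x P. pairing x a b = 1}"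
      and a: "a \<in> Stab x P"
    have "pairing x a (\<lambda>j. b j + b' j) = pairing x a b * pairing x a b'"
      unfolding pairing_eq using nz[of a] by (simp add: power_int_add prod.distrib)
    then show "pairing x a (\<lambda>j. b j + b' j) = 1" using a b b' by simp
  next
    fix b a assume b: "b \<in> {b. \<forall>a\<in>Stab x P. pairing x a b = 1}" and a: "a \<in> Stab x P"
    have "pairing x a (\<lambda>j. - b j) = inverse (pairing x a b)"
      unfolding pairing_eq power_int_minus prod_inversef[symmetric] by (simp add: comp_def)
    then show "pairing x a (\<lambda>j. - b j) = 1" using a b by simp
  qed
  have ind: "Z_indep_family B n'"
  proof (rule ccontr)
    assume "\<not> Z_indep_family B n'"
    then obtain J where J: "card (UNIV::'n set) < card J + n'"
      and good: "\<forall>b\<in>B. (\<forall>j. j \<notin> J \<longrightarrow> b j = 0) \<longrightarrow> (\<forall>j. b j = 0)"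
      using lattice_complement by blast
    obtain e where e: "bij_betw e {0..<card J} J" using ex_bij_betw_nat_finite[of J] by auto
    have ind0: "indep P (\<lambda>i. var (e i)) (card J)"
      by (rule vars_indep[OF x assms(3) good B_def e])
    obtain C where C: "\<forall>i\<le>n'. is_prime_ideal (C i)" "\<forall>i<n'. C i \<subset> C (Suc i)" "C n' = P"
      using height_chain[OF assms(4,2)] unfolding prime_chain_ending_def by blast
    obtain w' where "indep (C 0) w' (card J + n')"
      using indep_chain[OF C(1,2), of "\<lambda>i. var (e i)" "card J"] ind0 C(3) by auto
    then have "indep (C 0) w' (Suc (card (UNIV::'n set)))"
      by (rule indep_trunc) (use J in simp)
    moreover have "0 \<in> C 0" using C(1) prime_ideal_ideal ideal_0 by blast
    ultimately show False using not_indep_big by blast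
  qed
  have "Z_rank B \<ge> enat n'"
    unfolding Z_rank_def by (rule Sup_upper) (use ind in blast)
  then show ?thesis using sg B_def by blast
qed

end
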